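(* Let $\mathbb B$ be a monad and $\mathbb C$ a comonad on a category $\mathcal A$ with a mixed distributive law $\theta\colon\mathrm{BC}\Rightarrow\mathrm{CB}$. Let $\mathrm F\dashv\mathrm U$ be the Eilenberg--Moore adjunction of $\mathbb B$, $\mathbb T$ the induced comonad on $\mathcal A^{\mathbb B}$, $\mathbb C^\theta$ the lifted comonad on $\mathcal A^{\mathbb B}$, and $\mathrm V\colon(\mathcal A^{\mathbb B})_{\mathbb C^\theta}\rightleftarrows\mathcal A^{\mathbb B}\colon\mathrm G$ the Eilenberg--Moore (forgetful--cofree) adjunction of $\mathbb C^\theta$. Let $\mathbb T^\theta$ be the comonad on $(\mathcal A^{\mathbb B})_{\mathbb C^\theta}$ given by $\mathrm T^\theta((X,\alpha),\delta)=((\mathrm B(X),\mu^{\mathbb B}_X),\theta_X\mathrm B(\delta))$, $\mathrm T^\theta(f)=\mathrm T(f)$, with comultiplication and counit those of $\mathbb T$, so that $\mathrm V\mathrm T^\theta=\mathrm T\mathrm V$, and let $\tilde\Lambda\colon\mathrm V\mathrm T^\theta\Rightarrow\mathrm T\mathrm V$ be the identity. Then the unique natural transformation $\tilde\Omega\colon\mathrm T^\theta\mathrm G\Rightarrow\mathrm G\mathrm T$ whose mate under $\mathrm V\dashv\mathrm G$ equals $\tilde\Lambda$ is given by $\tilde\Omega_{(X,\alpha)}=\theta_X$ for all $(X,\alpha)\in\mathrm{Ob}(\mathcal A^{\mathbb B})$. In particular, $\tilde\Omega$ implements a comonad extension $\mathbb T^\theta$ of $\mathbb T$ if and only if, for every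 $(X,\alpha)\in\mathrm{Ob}(\mathcal A^{\mathbb B})$, $\theta_X$ is an isomorphism from $\mathrm T^\theta(\mathrm G(X,\alpha))$ to $\mathrm G(\mathrm T(X,\alpha))$ in $(\mathcal A^{\mathbb B})_{\mathbb C^\theta}$.
   Context: A mixed distributive law $\theta$ of a monad $(\mathrm B,\mu^{\mathbb B},\eta^{\mathbb B})$ over a comonad $(\mathrm C,\Delta^{\mathbb C},\varepsilon^{\mathbb C})$ is $\theta\colon\mathrm{BC}\Rightarrow\mathrm{CB}$ with $\theta\circ\mu^{\mathbb B}\mathrm C=\mathrm C\mu^{\mathbb B}\circ\theta\mathrm B\circ\mathrm B\theta$, $\theta\circ\eta^{\mathbb B}\mathrm C=\mathrm C\eta^{\mathbb B}$, $\Delta^{\mathbb C}\mathrm B\circ\theta=\mathrm C\theta\circ\theta\mathrm C\circ\mathrm B\Delta^{\mathbb C}$, $\varepsilon^{\mathbb C}\mathrm B\circ\theta=\mathrm B\varepsilon^{\mathbb C}$. $\mathcal A^{\mathbb B}$ is the category of $\mathbb B$-algebras $(X,\alpha)$; $\mathrm F(X)=(\mathrm B(X),\mu^{\mathbb B}_X)$, $\mathrm U$ forgets, counit $\varepsilon_{(X,\alpha)}=\alpha$; $\mathbb T=(\mathrm{FU},\mathrm F\eta^{\mathbb B}\mathrm U,\varepsilon)$. $\mathbb C^\theta$: $\mathrm C^\theta(X,\alpha)=(\mathrm C(X),\mathrm C(\alpha)\theta_X)$, $\mathrm C^\theta(f)=\mathrm C(f)$, $\Delta^{\mathbb C^\theta}_{(X,\alpha)}=\Delta^{\mathbb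 C}_X$, $\varepsilon^{\mathbb C^\theta}_{(X,\alpha)}=\varepsilon^{\mathbb C}_X$. $(\mathcal A^{\mathbb B})_{\mathbb C^\theta}$ is the category of $\mathbb C^\theta$-coalgebras $(Y,\delta\colon Y\to\mathrm C^\theta(Y))$ (coassociative, counital); $\mathrm G(Y)=(\mathrm C^\theta(Y),\Delta^{\mathbb C^\theta}_Y)$, $\mathrm V$ forgets; unit $\eta'_{(Y,\delta)}=\delta$, counit $\varepsilon'=\varepsilon^{\mathbb C^\theta}$. The mate of $\tilde\Omega\colon\mathrm T^\theta\mathrm G\Rightarrow\mathrm G\mathrm T$ under $\mathrm V\dashv\mathrm G$ is $\varepsilon'\mathrm T\mathrm V\circ\mathrm V\tilde\Omega\mathrm V\circ\mathrm V\mathrm T^\theta\eta'$. "$\tilde\Omega$ implements a comonad extension $\mathbb T^\theta$ of $\mathbb T$" means $\tilde\Omega$ is a natural isomorphism and $(\mathrm G,\tilde\Omega)$ is a lax morphism of comonads from $\mathbb T^\theta$ to $\mathbb T$, i.e. $\mathrm G\Delta^{\mathbb T}\circ\tilde\Omega=\tilde\Omega\mathrm T\circ\mathrm T^\theta\tilde\Omega\circ\Delta^{\mathbb T^\theta}\mathrm G$ and $\mathrm G\varepsilon^{\mathbb T}\circ\tilde\Omega=\varepsilon^{\mathbb T^\theta}\mathrm G$. *)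

theory Defs
  imports Main
begin

text \<open>A category with objects of type 'o and arrows of type 'a.
  hom X Y is the set of arrows from X to Y; cmp g f is "g after f".\<close>

record ('o, 'a) cat =
  obj :: "'o set"
  hom :: "'o \<Rightarrow> 'o \<Rightarrow> 'a set"
  cmp :: "'a \<Rightarrow> 'a \<Rightarrow> 'a"
  idt :: "'o \<Rightarrow> 'a"

definition is_cat :: "('o, 'a) cat \<Rightarrow> bool" where
  "is_cat A \<longleftrightarrow>
     (\<forall>X Y. hom A X Y \<noteq> {} \<longrightarrow> X \<in> obj A \<and> Y \<in> obj A) \<and>
     (\<forall>X\<in>obj A. idt A X \<in> hom A X X) \<and>
     (\<forall>X Y Z f g. f \<in> hom A X Y \<longrightarrow> g \<in> hom A Y Z \<longrightarrow> cmp A g f \<in> hom A X Z) \<and>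
     (\<forall>W X Y Z f g h. f \<in> hom A W X \<longrightarrow> g \<in> hom A X Y \<longrightarrow> h \<in> hom A Y Z \<longrightarrow>
        cmp A h (cmp A g f) = cmp A (cmp A h g) f) \<and>
     (\<forall>X Y f. f \<in> hom A X Y \<longrightarrow> cmp A (idt A Y) f = f \<and> cmp A f (idt A X) = f)"

definition is_functor ::
  "('o, 'a) cat \<Rightarrow> ('p, 'b) cat \<Rightarrow> ('o \<Rightarrow> 'p) \<Rightarrow> ('a \<Rightarrow> 'b) \<Rightarrow> bool" where
  "is_functor A A' Fo Fa \<longleftrightarrow>
     (\<forall>X\<in>obj A. Fo X \<in> obj A') \<and>
     (\<forall>X Y f. f \<in> hom A X Y \<longrightarrow> Fa f \<in> hom A' (Fo X) (Fo Y)) \<and>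
     (\<forall>X\<in>obj A. Fa (idt A X) = idt A' (Fo X)) \<and>
     (\<forall>X Y Z f g. f \<in> hom A X Y \<longrightarrow> g \<in> hom A Y Z \<longrightarrow> Fa (cmp A g f) = cmp A' (Fa g) (Fa f))"

definition is_nat ::
  "('o, 'a) cat \<Rightarrow> ('p, 'b) cat \<Rightarrow> ('o \<Rightarrow> 'p) \<Rightarrow> ('a \<Rightarrow> 'b) \<Rightarrow>
   ('o \<Rightarrow> 'p) \<Rightarrow> ('a \<Rightarrow> 'b) \<Rightarrow> ('o \<Rightarrow> 'b) \<Rightarrow> bool" where
  "is_nat A A' Fo Fa Go Ga \<tau> \<longleftrightarrow>
     (\<forall>X\<in>obj A. \<tau> X \<in> hom A' (Fo X) (Go X)) \<and>
     (\<forall>X Y f. f \<in> hom A X Y \<longrightarrow> cmp A' (\<tau> Y) (Fa f) = cmp A' (Ga f) (\<tau> X))"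

definition iso_in :: "('o, 'a) cat \<Rightarrow> 'a \<Rightarrow> 'o \<Rightarrow> 'o \<Rightarrow> bool" where
  "iso_in D f X Y \<longleftrightarrow> f \<in> hom D X Y \<and>
     (\<exists>g\<in>hom D Y X. cmp D g f = idt D X \<and> cmp D f g = idt D Y)"

record ('o, 'a) monad =
  mo :: "'o \<Rightarrow> 'o"
  ma :: "'a \<Rightarrow> 'a"
  mu :: "'o \<Rightarrow> 'a"
  eta :: "'o \<Rightarrow> 'a"

record ('o, 'a) comonad =
  co :: "'o \<Rightarrow> 'o"
  ca :: "'a \<Rightarrow> 'a"
  dlt :: "'o \<Rightarrow> 'a"
  eps :: "'o \<Rightarrow> 'a"

definition is_monad :: "('o, 'a) cat \<Rightarrow> ('o, 'a) monad \<Rightarrow> bool" where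
  "is_monad A B \<longleftrightarrow>
     is_functor A A (mo B) (ma B) \<and>
     is_nat A A (mo B \<circ> mo B) (ma B \<circ> ma B) (mo B) (ma B) (mu B) \<and>
     is_nat A A id id (mo B) (ma B) (eta B) \<and>
     (\<forall>X\<in>obj A.
        cmp A (mu B X) (ma B (mu B X)) = cmp A (mu B X) (mu B (mo B X)) \<and>
        cmp A (mu B X) (eta B (mo B X)) = idt A (mo B X) \<and>
        cmp A (mu B X) (ma B (eta B X)) = idt A (mo B X))"

definition is_comonad :: "('o, 'a) cat \<Rightarrow> ('o, 'a) comonad \<Rightarrow> bool" where
  "is_comonad A C \<longleftrightarrow>
     is_functor A A (co C) (ca C) \<and>
     is_nat A A (co C) (ca C) (co C \<circ> co C) (ca C \<circ> ca C) (dlt C) \<and>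
     is_nat A A (co C) (ca C) id id (eps C) \<and>
     (\<forall>X\<in>obj A.
        cmp A (ca C (dlt C X)) (dlt C X) = cmp A (dlt C (co C X)) (dlt C X) \<and>
        cmp A (eps C (co C X)) (dlt C X) = idt A (co C X) \<and>
        cmp A (ca C (eps C X)) (dlt C X) = idt A (co C X))"

definition is_mixed_dist ::
  "('o, 'a) cat \<Rightarrow> ('o, 'a) monad \<Rightarrow> ('o, 'a) comonad \<Rightarrow> ('o \<Rightarrow> 'a) \<Rightarrow> bool" where
  "is_mixed_dist A B C \<theta> \<longleftrightarrow>
     is_nat A A (mo B \<circ> co C) (ma B \<circ> ca C) (co C \<circ> mo B) (ca C \<circ> ma B) \<theta> \<and>
     (\<forall>X\<in>obj A.
        cmp A (\<theta> X) (mu B (co C X)) =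
          cmp A (ca C (mu B X)) (cmp A (\<theta> (mo B X)) (ma B (\<theta> X))) \<and>
        cmp A (\<theta> X) (eta B (co C X)) = ca C (eta B X) \<and>
        cmp A (dlt C (mo B X)) (\<theta> X) =
          cmp A (ca C (\<theta> X)) (cmp A (\<theta> (co C X)) (ma B (dlt C X))) \<and>
        cmp A (eps C (mo B X)) (\<theta> X) = ma B (eps C X))"

text \<open>Objects of A^B are pairs (X, alpha); arrows are arrows of A that are algebra maps.\<close>
definition alg_obj :: "('o, 'a) cat \<Rightarrow> ('o, 'a) monad \<Rightarrow> ('o \<times> 'a) set" where
  "alg_obj A B = {Xa. fst Xa \<in> obj A \<and> snd Xa \<in> hom A (mo B (fst Xa)) (fst Xa) \<and>
      cmp A (snd Xa) (eta B (fst Xa)) = idt A (fst Xa) \<and>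
      cmp A (snd Xa) (ma B (snd Xa)) = cmp A (snd Xa) (mu B (fst Xa))}"

definition alg_cat :: "('o, 'a) cat \<Rightarrow> ('o, 'a) monad \<Rightarrow> ('o \<times> 'a, 'a) cat" where
  "alg_cat A B = \<lparr> obj = alg_obj A B,
     hom = (\<lambda>Xa Yb. if Xa \<in> alg_obj A B \<and> Yb \<in> alg_obj A B
        then {f \<in> hom A (fst Xa) (fst Yb). cmp A f (snd Xa) = cmp A (snd Yb) (ma B f)}
        else {}),
     cmp = cmp A,
     idt = (\<lambda>Xa. idt A (fst Xa)) \<rparr>"

definition coalg_obj :: "('p, 'a) cat \<Rightarrow> ('p, 'a) comonad \<Rightarrow> ('p \<times> 'a) set" where
  "coalg_obj D K = {Yd. fst Yd \<in> obj D \<and> snd Yd \<in> hom D (fst Yd) (co K (fst Yd)) \<and>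
      cmp D (ca K (snd Yd)) (snd Yd) = cmp D (dlt K (fst Yd)) (snd Yd) \<and>
      cmp D (eps K (fst Yd)) (snd Yd) = idt D (fst Yd)}"

definition coalg_cat :: "('p, 'a) cat \<Rightarrow> ('p, 'a) comonad \<Rightarrow> ('p \<times> 'a, 'a) cat" where
  "coalg_cat D K = \<lparr> obj = coalg_obj D K,
     hom = (\<lambda>Yd Ze. if Yd \<in> coalg_obj D K \<and> Ze \<in> coalg_obj D K
        then {f \<in> hom D (fst Yd) (fst Ze). cmp D (ca K f) (snd Yd) = cmp D (snd Ze) f}
        else {}),
     cmp = cmp D,
     idt = (\<lambda>Yd. idt D (fst Yd)) \<rparr>"

definition Cth :: "('o, 'a) cat \<Rightarrow> ('o, 'a) comonad \<Rightarrow> ('o \<Rightarrow> 'a) \<Rightarrow> ('o \<times> 'a, 'a) comonad" where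
  "Cth A C \<theta> = \<lparr> co = (\<lambda>Xa. (co C (fst Xa), cmp A (ca C (snd Xa)) (\<theta> (fst Xa)))),
                  ca = ca C,
                  dlt = (\<lambda>Xa. dlt C (fst Xa)),
                  eps = (\<lambda>Xa. eps C (fst Xa)) \<rparr>"

definition EMcoalg ::
  "('o, 'a) cat \<Rightarrow> ('o, 'a) monad \<Rightarrow> ('o, 'a) comonad \<Rightarrow> ('o \<Rightarrow> 'a) \<Rightarrow> (('o \<times> 'a) \<times> 'a, 'a) cat" where
  "EMcoalg A B C \<theta> = coalg_cat (alg_cat A B) (Cth A C \<theta>)"

text \<open>T = FU on A^B: (X,alpha) -> (B X, mu_X), f -> B f.\<close>
definition T_o :: "('o, 'a) monad \<Rightarrow> 'o \<times> 'a \<Rightarrow> 'o \<times> 'a" where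
  "T_o B Xa = (mo B (fst Xa), mu B (fst Xa))"

text \<open>Cofree functor G : A^B -> (A^B)_{C^theta}, G(Y) = (C^theta Y, Delta_Y), G f = C f.\<close>
definition G_o :: "('o, 'a) cat \<Rightarrow> ('o, 'a) comonad \<Rightarrow> ('o \<Rightarrow> 'a) \<Rightarrow> 'o \<times> 'a \<Rightarrow> ('o \<times> 'a) \<times> 'a" where
  "G_o A C \<theta> Xa = (co (Cth A C \<theta>) Xa, dlt (Cth A C \<theta>) Xa)"

text \<open>T^theta((X,alpha),delta) = ((B X, mu_X), theta_X . B delta), T^theta f = T f.\<close>
definition Tth_o :: "('o, 'a) cat \<Rightarrow> ('o, 'a) monad \<Rightarrow> ('o \<Rightarrow> 'a) \<Rightarrow> ('o \<times> 'a) \<times> 'a \<Rightarrow> ('o \<times> 'a) \<times> 'a" where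
  "Tth_o A B \<theta> Y = (T_o B (fst Y), cmp A (\<theta> (fst (fst Y))) (ma B (snd Y)))"

definition Omega_nat ::
  "('o, 'a) cat \<Rightarrow> ('o, 'a) monad \<Rightarrow> ('o, 'a) comonad \<Rightarrow> ('o \<Rightarrow> 'a) \<Rightarrow> ('o \<times> 'a \<Rightarrow> 'a) \<Rightarrow> bool" where
  "Omega_nat A B C \<theta> \<Omega> \<longleftrightarrow>
     is_nat (alg_cat A B) (EMcoalg A B C \<theta>)
       (Tth_o A B \<theta> \<circ> G_o A C \<theta>) (ma B \<circ> ca C)
       (G_o A C \<theta> \<circ> T_o B) (ca C \<circ> ma B) \<Omega>"

text \<open>Mate of Omega under V -| G, evaluated at a coalgebra Y = ((X,alpha),delta):
  eps'_{T V Y} . Omega_{V Y} . T^theta(eta'_Y), with eps' = eps^{C^theta}, eta'_Y = delta.\<close>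
definition mate ::
  "('o, 'a) cat \<Rightarrow> ('o, 'a) monad \<Rightarrow> ('o, 'a) comonad \<Rightarrow> ('o \<Rightarrow> 'a) \<Rightarrow> ('o \<times> 'a \<Rightarrow> 'a) \<Rightarrow>
   ('o \<times> 'a) \<times> 'a \<Rightarrow> 'a" where
  "mate A B C \<theta> \<Omega> Y =
     cmp (alg_cat A B) (eps (Cth A C \<theta>) (T_o B (fst Y)))
        (cmp (alg_cat A B) (\<Omega> (fst Y)) (ma B (snd Y)))"

text \<open>Omega implements a comonad extension T^theta of T: natural isomorphism, and
  (G, Omega) is a lax morphism of comonads from T^theta to T. Here
  Delta^T_(X,alpha) = B eta_X, eps^T_(X,alpha) = alpha, and the comultiplication and counit
  of T^theta at Y are those of T at V Y.\<close>
definition implements_ext ::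
  "('o, 'a) cat \<Rightarrow> ('o, 'a) monad \<Rightarrow> ('o, 'a) comonad \<Rightarrow> ('o \<Rightarrow> 'a) \<Rightarrow> ('o \<times> 'a \<Rightarrow> 'a) \<Rightarrow> bool" where
  "implements_ext A B C \<theta> \<Omega> \<longleftrightarrow>
     Omega_nat A B C \<theta> \<Omega> \<and>
     (\<forall>Xa\<in>obj (alg_cat A B).
        iso_in (EMcoalg A B C \<theta>) (\<Omega> Xa) (Tth_o A B \<theta> (G_o A C \<theta> Xa)) (G_o A C \<theta> (T_o B Xa))) \<and>
     (\<forall>Xa\<in>obj (alg_cat A B).
        cmp (EMcoalg A B C \<theta>) (ca C (ma B (eta B (fst Xa)))) (\<Omega> Xa) =
        cmp (EMcoalg A B C \<theta>) (\<Omega> (T_o B Xa))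
          (cmp (EMcoalg A B C \<theta>) (ma B (\<Omega> Xa))
             (ma B (eta B (fst (fst (G_o A C \<theta> Xa))))))) \<and>
     (\<forall>Xa\<in>obj (alg_cat A B).
        cmp (EMcoalg A B C \<theta>) (ca C (snd Xa)) (\<Omega> Xa) = snd (fst (G_o A C \<theta> Xa)))"

end

theory Submission
  imports Defs
begin

context
  fixes A :: "('o, 'a) cat" and B :: "('o, 'a) monad" and C :: "('o, 'a) comonad"
    and \<theta> :: "'o \<Rightarrow> 'a"
  assumes cat: "is_cat A" and mon: "is_monad A B" and com: "is_comonad A C"
    and dist: "is_mixed_dist A B C \<theta>"
begin

lemma hom_obj: "f \<in> hom A X Y \<Longrightarrow> X \<in> obj A \<and> Y \<in> obj A"
  using cat unfolding is_cat_def by blast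
lemma id_hom: "X \<in> obj A \<Longrightarrow> idt A X \<in> hom A X X"
  using cat unfolding is_cat_def by blast
lemma comp_hom: "f \<in> hom A X Y \<Longrightarrow> g \<in> hom A Y Z \<Longrightarrow> cmp A g f \<in> hom A X Z"
  using cat unfolding is_cat_def by blast
lemma assoc: "f \<in> hom A W X \<Longrightarrow> g \<in> hom A X Y \<Longrightarrow> h \<in> hom A Y Z \<Longrightarrow>
   cmp A h (cmp A g f) = cmp A (cmp A h g) f"
  using cat unfolding is_cat_def by blast
lemma idl: "f \<in> hom A X Y \<Longrightarrow> cmp A (idt A Y) f = f"
  using cat unfolding is_cat_def by blast
lemma idr: "f \<in> hom A X Y \<Longrightarrow> cmp A f (idt A X) = f"
  using cat unfolding is_cat_def by blast

lemma B_obj: "X \<in> obj A \<Longrightarrow> mo B X \<in> obj A"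
  and B_hom: "f \<in> hom A X Y \<Longrightarrow> ma B f \<in> hom A (mo B X) (mo B Y)"
  and B_id: "X \<in> obj A \<Longrightarrow> ma B (idt A X) = idt A (mo B X)"
  and B_comp: "f \<in> hom A X Y \<Longrightarrow> g \<in> hom A Y Z \<Longrightarrow> ma B (cmp A g f) = cmp A (ma B g) (ma B f)"
  using mon unfolding is_monad_def is_functor_def by blast+
lemma mu_hom: "X \<in> obj A \<Longrightarrow> mu B X \<in> hom A (mo B (mo B X)) (mo B X)"
  and mu_nat: "f \<in> hom A X Y \<Longrightarrow> cmp A (mu B Y) (ma B (ma B f)) = cmp A (ma B f) (mu B X)"
  and eta_hom: "X \<in> obj A \<Longrightarrow> eta B X \<in> hom A X (mo B X)"
  and eta_nat: "f \<in> hom A X Y \<Longrightarrow> cmp A (eta B Y) f = cmp A (ma B f) (eta B X)"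
  and mu_assoc: "X \<in> obj A \<Longrightarrow> cmp A (mu B X) (ma B (mu B X)) = cmp A (mu B X) (mu B (mo B X))"
  and mu_eta1: "X \<in> obj A \<Longrightarrow> cmp A (mu B X) (eta B (mo B X)) = idt A (mo B X)"
  and mu_eta2: "X \<in> obj A \<Longrightarrow> cmp A (mu B X) (ma B (eta B X)) = idt A (mo B X)"
  using mon unfolding is_monad_def is_nat_def by auto

lemma C_obj: "X \<in> obj A \<Longrightarrow> co C X \<in> obj A"
  and C_hom: "f \<in> hom A X Y \<Longrightarrow> ca C f \<in> hom A (co C X) (co C Y)"
  and C_id: "X \<in> obj A \<Longrightarrow> ca C (idt A X) = idt A (co C X)"
  and C_comp: "f \<in> hom A X Y \<Longrightarrow> g \<in> hom A Y Z \<Longrightarrow> ca C (cmp A g f) = cmp A (ca C g) (ca C f)"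
  using com unfolding is_comonad_def is_functor_def by blast+
lemma dl_hom: "X \<in> obj A \<Longrightarrow> dlt C X \<in> hom A (co C X) (co C (co C X))"
  and dl_nat: "f \<in> hom A X Y \<Longrightarrow> cmp A (dlt C Y) (ca C f) = cmp A (ca C (ca C f)) (dlt C X)"
  and ep_hom: "X \<in> obj A \<Longrightarrow> eps C X \<in> hom A (co C X) X"
  and ep_nat: "f \<in> hom A X Y \<Longrightarrow> cmp A (eps C Y) (ca C f) = cmp A f (eps C X)"
  and dl_coassoc: "X \<in> obj A \<Longrightarrow> cmp A (ca C (dlt C X)) (dlt C X) = cmp A (dlt C (co C X)) (dlt C X)"
  and dl_ep1: "X \<in> obj A \<Longrightarrow> cmp A (eps C (co C X)) (dlt C X) = idt A (co C X)"
  and dl_ep2: "X \<in> obj A \<Longrightarrow> cmp A (ca C (eps C X)) (dlt C X) = idt A (co C X)"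
  using com unfolding is_comonad_def is_nat_def by auto

lemma th_hom: "X \<in> obj A \<Longrightarrow> \<theta> X \<in> hom A (mo B (co C X)) (co C (mo B X))"
  and th_nat: "f \<in> hom A X Y \<Longrightarrow> cmp A (\<theta> Y) (ma B (ca C f)) = cmp A (ca C (ma B f)) (\<theta> X)"
  and th_mu: "X \<in> obj A \<Longrightarrow> cmp A (\<theta> X) (mu B (co C X)) =
          cmp A (ca C (mu B X)) (cmp A (\<theta> (mo B X)) (ma B (\<theta> X)))"
  and th_eta: "X \<in> obj A \<Longrightarrow> cmp A (\<theta> X) (eta B (co C X)) = ca C (eta B X)"
  and th_dl: "X \<in> obj A \<Longrightarrow> cmp A (dlt C (mo B X)) (\<theta> X) =
          cmp A (ca C (\<theta> X)) (cmp A (\<theta> (co C X)) (ma B (dlt C X)))"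
  and th_ep: "X \<in> obj A \<Longrightarrow> cmp A (eps C (mo B X)) (\<theta> X) = ma B (eps C X)"
  using dist unfolding is_mixed_dist_def is_nat_def by auto


definition "dm p = fst p"
definition "ar p = fst (snd p)"
definition "cd p = snd (snd p)"
definition "wt p \<longleftrightarrow> ar p \<in> hom A (dm p) (cd p)"
definition tc (infixr "\<odot>" 55) where "q \<odot> p = (dm p, cmp A (ar q) (ar p), cd q)"
definition "Bt p = (mo B (dm p), ma B (ar p), mo B (cd p))"
definition "Ct p = (co C (dm p), ca C (ar p), co C (cd p))"
definition "ID X = (X, idt A X, X)"
definition "TH X = (mo B (co C X), \<theta> X, co C (mo B X))"
definition "MU X = (mo B (mo B X), mu B X, mo B X)"
definition "ETA X = (X, eta B X, mo B X)"
definition "DL X = (co C X, dlt C X, co C (co C X))"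
definition "EP X = (co C X, eps C X, X)"

lemmas tdefs = dm_def ar_def cd_def tc_def Bt_def Ct_def ID_def TH_def MU_def ETA_def DL_def EP_def

lemma dm_simps[simp]: "dm (q \<odot> p) = dm p" "dm (Bt p) = mo B (dm p)" "dm (Ct p) = co C (dm p)"
  "dm (ID X) = X" "dm (TH X) = mo B (co C X)" "dm (MU X) = mo B (mo B X)" "dm (ETA X) = X"
  "dm (DL X) = co C X" "dm (EP X) = co C X"
  by (simp_all add: tdefs)
lemma cd_simps[simp]: "cd (q \<odot> p) = cd q" "cd (Bt p) = mo B (cd p)" "cd (Ct p) = co C (cd p)"
  "cd (ID X) = X" "cd (TH X) = co C (mo B X)" "cd (MU X) = mo B X" "cd (ETA X) = mo B X"
  "cd (DL X) = co C (co C X)" "cd (EP X) = X"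
  by (simp_all add: tdefs)
lemma ar_simps[simp]: "ar (q \<odot> p) = cmp A (ar q) (ar p)" "ar (Bt p) = ma B (ar p)" "ar (Ct p) = ca C (ar p)"
  "ar (ID X) = idt A X" "ar (TH X) = \<theta> X" "ar (MU X) = mu B X" "ar (ETA X) = eta B X"
  "ar (DL X) = dlt C X" "ar (EP X) = eps C X"
  by (simp_all add: tdefs)

lemma teq: "dm p = dm q \<Longrightarrow> ar p = ar q \<Longrightarrow> cd p = cd q \<Longrightarrow> p = q"
  by (simp add: dm_def ar_def cd_def prod_eq_iff)

lemma dm_obj[simp]: "wt p \<Longrightarrow> dm p \<in> obj A" and cd_obj[simp]: "wt p \<Longrightarrow> cd p \<in> obj A"
  using hom_obj unfolding wt_def by blast+
lemma obj_simps[simp]: "X \<in> obj A \<Longrightarrow> mo B X \<in> obj A" "X \<in> obj A \<Longrightarrow> co C X \<in> obj A"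
  by (simp_all add: B_obj C_obj)

lemma wt_simps[simp]:
  "wt p \<Longrightarrow> wt q \<Longrightarrow> cd p = dm q \<Longrightarrow> wt (q \<odot> p)"
  "wt p \<Longrightarrow> wt (Bt p)" "wt p \<Longrightarrow> wt (Ct p)"
  "X \<in> obj A \<Longrightarrow> wt (ID X)" "X \<in> obj A \<Longrightarrow> wt (TH X)" "X \<in> obj A \<Longrightarrow> wt (MU X)"
  "X \<in> obj A \<Longrightarrow> wt (ETA X)" "X \<in> obj A \<Longrightarrow> wt (DL X)" "X \<in> obj A \<Longrightarrow> wt (EP X)"
  unfolding wt_def
  by (auto intro: comp_hom B_hom C_hom id_hom th_hom mu_hom eta_hom dl_hom ep_hom)

lemma tassoc: "wt p \<Longrightarrow> wt q \<Longrightarrow> wt r \<Longrightarrow> cd p = dm q \<Longrightarrow> cd q = dm r \<Longrightarrow> (r \<odot> q) \<odot> p = r \<odot> (q \<odot> p)"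
  by (rule teq) (auto simp: wt_def assoc)
lemma tidl: "wt p \<Longrightarrow> cd p = X \<Longrightarrow> ID X \<odot> p = p"
  by (rule teq) (auto simp: wt_def idl)
lemma tidr: "wt p \<Longrightarrow> dm p = X \<Longrightarrow> p \<odot> ID X = p"
  by (rule teq) (auto simp: wt_def idr)
lemma Bt_comp: "wt p \<Longrightarrow> wt q \<Longrightarrow> cd p = dm q \<Longrightarrow> Bt (q \<odot> p) = Bt q \<odot> Bt p"
  by (rule teq) (auto simp: wt_def B_comp)
lemma Ct_comp: "wt p \<Longrightarrow> wt q \<Longrightarrow> cd p = dm q \<Longrightarrow> Ct (q \<odot> p) = Ct q \<odot> Ct p"
  by (rule teq) (auto simp: wt_def C_comp)
lemma Bt_ID: "X \<in> obj A \<Longrightarrow> Bt (ID X) = ID (mo B X)"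
  by (rule teq) (auto simp: B_id)
lemma Ct_ID: "X \<in> obj A \<Longrightarrow> Ct (ID X) = ID (co C X)"
  by (rule teq) (auto simp: C_id)

lemma MU_nat: "wt f \<Longrightarrow> MU (cd f) \<odot> Bt (Bt f) = Bt f \<odot> MU (dm f)"
  by (rule teq) (auto simp: wt_def mu_nat)
lemma ETA_nat: "wt f \<Longrightarrow> ETA (cd f) \<odot> f = Bt f \<odot> ETA (dm f)"
  by (rule teq) (auto simp: wt_def eta_nat)
lemma DL_nat: "wt f \<Longrightarrow> DL (cd f) \<odot> Ct f = Ct (Ct f) \<odot> DL (dm f)"
  by (rule teq) (auto simp: wt_def dl_nat)
lemma EP_nat: "wt f \<Longrightarrow> EP (cd f) \<odot> Ct f = f \<odot> EP (dm f)"
  by (rule teq) (auto simp: wt_def ep_nat)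
lemma TH_nat: "wt f \<Longrightarrow> TH (cd f) \<odot> Bt (Ct f) = Ct (Bt f) \<odot> TH (dm f)"
  by (rule teq) (auto simp: wt_def th_nat)

lemma mon_laws: "X \<in> obj A \<Longrightarrow> MU X \<odot> Bt (MU X) = MU X \<odot> MU (mo B X)"
  "X \<in> obj A \<Longrightarrow> MU X \<odot> ETA (mo B X) = ID (mo B X)"
  "X \<in> obj A \<Longrightarrow> MU X \<odot> Bt (ETA X) = ID (mo B X)"
  by (rule teq; simp add: mu_assoc mu_eta1 mu_eta2)+
lemma com_laws: "X \<in> obj A \<Longrightarrow> Ct (DL X) \<odot> DL X = DL (co C X) \<odot> DL X"
  "X \<in> obj A \<Longrightarrow> EP (co C X) \<odot> DL X = ID (co C X)"
  "X \<in> obj A \<Longrightarrow> Ct (EP X) \<odot> DL X = ID (co C X)"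
  by (rule teq; simp add: dl_coassoc dl_ep1 dl_ep2)+
lemma dist_laws: "X \<in> obj A \<Longrightarrow> TH X \<odot> MU (co C X) = Ct (MU X) \<odot> (TH (mo B X) \<odot> Bt (TH X))"
  "X \<in> obj A \<Longrightarrow> TH X \<odot> ETA (co C X) = Ct (ETA X)"
  "X \<in> obj A \<Longrightarrow> DL (mo B X) \<odot> TH X = Ct (TH X) \<odot> (TH (co C X) \<odot> Bt (DL X))"
  "X \<in> obj A \<Longrightarrow> EP (mo B X) \<odot> TH X = Bt (EP X)"
  by (rule teq; simp add: th_mu th_eta th_dl th_ep)+

lemma wk1: "q2 \<odot> q1 = p \<Longrightarrow> wt k \<Longrightarrow> wt q1 \<Longrightarrow> wt q2 \<Longrightarrow> cd k = dm q1 \<Longrightarrow> cd q1 = dm q2 \<Longrightarrow>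
  q2 \<odot> (q1 \<odot> k) = p \<odot> k"
  by (metis tassoc)
lemma wk2: "q2 \<odot> q1 = p2 \<odot> p1 \<Longrightarrow> wt k \<Longrightarrow> wt q1 \<Longrightarrow> wt q2 \<Longrightarrow> wt p1 \<Longrightarrow> wt p2 \<Longrightarrow>
  cd k = dm q1 \<Longrightarrow> cd q1 = dm q2 \<Longrightarrow> cd p1 = dm p2 \<Longrightarrow>
  q2 \<odot> (q1 \<odot> k) = p2 \<odot> (p1 \<odot> k)"
  by (metis tassoc dm_simps(1))


lemma tup_simps[simp]: "dm (x, f, y) = x" "ar (x, f, y) = f" "cd (x, f, y) = y"
  by (simp_all add: tdefs)

lemma wt_tup: "wt (x, f, y) \<longleftrightarrow> f \<in> hom A x y" by (simp add: wt_def)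

lemma alg_obj_tr: "(X, \<alpha>) \<in> alg_obj A B \<longleftrightarrow> wt (mo B X, \<alpha>, X) \<and>
   (mo B X, \<alpha>, X) \<odot> ETA X = ID X \<and> (mo B X, \<alpha>, X) \<odot> Bt (mo B X, \<alpha>, X) = (mo B X, \<alpha>, X) \<odot> MU X"
  unfolding alg_obj_def wt_def using hom_obj by (auto simp: tdefs)

lemma alg_hom_tr: "f \<in> hom (alg_cat A B) (X, \<alpha>) (Y, \<beta>) \<longleftrightarrow> (X, \<alpha>) \<in> alg_obj A B \<and> (Y, \<beta>) \<in> alg_obj A B \<and>
   wt (X, f, Y) \<and> (X, f, Y) \<odot> (mo B X, \<alpha>, X) = (mo B Y, \<beta>, Y) \<odot> Bt (X, f, Y)"
  unfolding alg_cat_def wt_def by (auto simp: tdefs)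

lemma free_alg: "X \<in> obj A \<Longrightarrow> (mo B X, mu B X) \<in> alg_obj A B"
proof -
  assume X: "X \<in> obj A"
  have e: "(mo B (mo B X), mu B X, mo B X) = MU X" by (simp add: MU_def)
  show ?thesis unfolding alg_obj_tr e using X by (simp add: mon_laws)
qed

lemma cth_alg: assumes "(X, \<alpha>) \<in> alg_obj A B"
  shows "(co C X, cmp A (ca C \<alpha>) (\<theta> X)) \<in> alg_obj A B"
proof -
  define a where "a = (mo B X, \<alpha>, X)"
  have wa: "wt a" and a1: "a \<odot> ETA X = ID X" and a2: "a \<odot> Bt a = a \<odot> MU X"
    using assms unfolding alg_obj_tr a_def by auto
  have dma: "dm a = mo B X" and cda: "cd a = X" by (simp_all add: a_def)
  have X: "X \<in> obj A" using wa cda cd_obj by metis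
  have e: "(mo B (co C X), cmp A (ca C \<alpha>) (\<theta> X), co C X) = Ct a \<odot> TH X"
    by (rule teq) (simp_all add: a_def)
  have n1: "TH X \<odot> Bt (Ct a) = Ct (Bt a) \<odot> TH (mo B X)" using TH_nat[of a] wa by (simp add: dma cda)
  have "(Ct a \<odot> TH X) \<odot> ETA (co C X) = Ct a \<odot> (TH X \<odot> ETA (co C X))"
    using wa X by (simp add: tassoc dma cda)
  also have "\<dots> = Ct a \<odot> Ct (ETA X)" using X by (simp add: dist_laws)
  also have "\<dots> = Ct (a \<odot> ETA X)" using X wa by (simp add: Ct_comp dma cda)
  also have "\<dots> = ID (co C X)" using X by (simp add: a1 Ct_ID)
  finally have b1: "(Ct a \<odot> TH X) \<odot> ETA (co C X) = ID (co C X)" .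
  have "(Ct a \<odot> TH X) \<odot> Bt (Ct a \<odot> TH X) = Ct a \<odot> (TH X \<odot> (Bt (Ct a) \<odot> Bt (TH X)))"
    using wa X by (simp add: tassoc Bt_comp dma cda)
  also have "\<dots> = Ct a \<odot> (Ct (Bt a) \<odot> (TH (mo B X) \<odot> Bt (TH X)))"
    using wa X by (simp add: wk2[OF n1] dma cda)
  also have "\<dots> = Ct (a \<odot> Bt a) \<odot> (TH (mo B X) \<odot> Bt (TH X))"
    using wa X by (simp add: Ct_comp tassoc dma cda)
  also have "\<dots> = Ct (a \<odot> MU X) \<odot> (TH (mo B X) \<odot> Bt (TH X))" by (simp add: a2)
  also have "\<dots> = Ct a \<odot> (Ct (MU X) \<odot> (TH (mo B X) \<odot> Bt (TH X)))"
    using wa X by (simp add: Ct_comp tassoc dma cda)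
  also have "\<dots> = Ct a \<odot> (TH X \<odot> MU (co C X))"
    using X by (simp add: dist_laws)
  also have "\<dots> = (Ct a \<odot> TH X) \<odot> MU (co C X)"
    using wa X by (simp add: tassoc dma cda)
  finally have b2: "(Ct a \<odot> TH X) \<odot> Bt (Ct a \<odot> TH X) = (Ct a \<odot> TH X) \<odot> MU (co C X)" .
  show ?thesis unfolding alg_obj_tr e using b1 b2 wa X by (simp add: dma cda)
qed


lemma obj_alg: "obj (alg_cat A B) = alg_obj A B" by (simp add: alg_cat_def)
lemma obj_em: "obj (EMcoalg A B C \<theta>) = coalg_obj (alg_cat A B) (Cth A C \<theta>)"
  by (simp add: EMcoalg_def coalg_cat_def)
lemma cmp_alg: "cmp (alg_cat A B) = cmp A" by (simp add: alg_cat_def)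
lemma cmp_em: "cmp (EMcoalg A B C \<theta>) = cmp A" by (simp add: EMcoalg_def coalg_cat_def alg_cat_def)
lemma idt_alg: "idt (alg_cat A B) Xa = idt A (fst Xa)" by (simp add: alg_cat_def)

lemma coalg_tr: "((X, \<alpha>), \<delta>) \<in> coalg_obj (alg_cat A B) (Cth A C \<theta>) \<longleftrightarrow>
   (X, \<alpha>) \<in> alg_obj A B \<and> (co C X, cmp A (ca C \<alpha>) (\<theta> X)) \<in> alg_obj A B \<and> wt (X, \<delta>, co C X) \<and>
   (X, \<delta>, co C X) \<odot> (mo B X, \<alpha>, X) = (mo B (co C X), cmp A (ca C \<alpha>) (\<theta> X), co C X) \<odot> Bt (X, \<delta>, co C X) \<and>
   Ct (X, \<delta>, co C X) \<odot> (X, \<delta>, co C X) = DL X \<odot> (X, \<delta>, co C X) \<and>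
   EP X \<odot> (X, \<delta>, co C X) = ID X"
  unfolding coalg_obj_def obj_alg
  by (auto simp: alg_hom_tr[symmetric] Cth_def alg_cat_def tdefs wt_def)

lemma em_hom_tr: "f \<in> hom (EMcoalg A B C \<theta>) ((X, \<alpha>), \<delta>) ((Y, \<beta>), \<gamma>) \<longleftrightarrow>
   ((X, \<alpha>), \<delta>) \<in> coalg_obj (alg_cat A B) (Cth A C \<theta>) \<and> ((Y, \<beta>), \<gamma>) \<in> coalg_obj (alg_cat A B) (Cth A C \<theta>) \<and>
   f \<in> hom (alg_cat A B) (X, \<alpha>) (Y, \<beta>) \<and>
   Ct (X, f, Y) \<odot> (X, \<delta>, co C X) = (Y, \<gamma>, co C Y) \<odot> (X, f, Y)"
  unfolding EMcoalg_def coalg_cat_def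
  by (auto simp: Cth_def alg_cat_def tdefs)


lemma cth_tr: "(mo B (co C X), cmp A (ca C \<alpha>) (\<theta> X), co C X) = Ct (mo B X, \<alpha>, X) \<odot> TH X"
  by (rule teq) simp_all
lemma DL_tr: "(co C X, dlt C X, co C (co C X)) = DL X" by (simp add: DL_def)

lemma alg_facts: assumes "(X, \<alpha>) \<in> alg_obj A B"
  shows "wt (mo B X, \<alpha>, X)" "X \<in> obj A" "(mo B X, \<alpha>, X) \<odot> ETA X = ID X"
    "(mo B X, \<alpha>, X) \<odot> Bt (mo B X, \<alpha>, X) = (mo B X, \<alpha>, X) \<odot> MU X"
  using assms unfolding alg_obj_tr by (auto dest: cd_obj)

lemma G_coalg: assumes al: "(X, \<alpha>) \<in> alg_obj A B"
  shows "G_o A C \<theta> (X, \<alpha>) \<in> coalg_obj (alg_cat A B) (Cth A C \<theta>)"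
proof -
  define a where "a = (mo B X, \<alpha>, X)"
  have wa: "wt a" and X: "X \<in> obj A" using alg_facts[OF al] by (simp_all add: a_def)
  have dma: "dm a = mo B X" and cda: "cd a = X" by (simp_all add: a_def)
  have e1: "G_o A C \<theta> (X, \<alpha>) = ((co C X, cmp A (ca C \<alpha>) (\<theta> X)), dlt C X)"
    by (simp add: G_o_def Cth_def)
  have al2: "(co C X, cmp A (ca C \<alpha>) (\<theta> X)) \<in> alg_obj A B" by (rule cth_alg[OF al])
  have al3: "(co C (co C X), cmp A (ca C (cmp A (ca C \<alpha>) (\<theta> X))) (\<theta> (co C X))) \<in> alg_obj A B"
    by (rule cth_alg[OF al2])
  have n1: "Ct (Ct a) \<odot> DL (mo B X) = DL X \<odot> Ct a" using DL_nat[of a] wa by (simp add: dma cda)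
  have "Ct (Ct a \<odot> TH X) \<odot> TH (co C X) \<odot> Bt (DL X) = Ct (Ct a) \<odot> (Ct (TH X) \<odot> (TH (co C X) \<odot> Bt (DL X)))"
    using wa X by (simp add: Ct_comp tassoc dma cda)
  also have "\<dots> = Ct (Ct a) \<odot> (DL (mo B X) \<odot> TH X)" using X by (simp add: dist_laws)
  also have "\<dots> = DL X \<odot> (Ct a \<odot> TH X)" using wa X by (simp add: wk2[OF n1] dma cda)
  finally have eq: "DL X \<odot> (Ct a \<odot> TH X) = (Ct (Ct a \<odot> TH X) \<odot> TH (co C X)) \<odot> Bt (DL X)"
    using wa X by (simp add: tassoc dma cda)
  show ?thesis unfolding e1 coalg_tr using al2 al3 X eq
    by (simp add: cth_tr DL_tr com_laws a_def)
qed


lemma MU_tr: "(mo B (mo B X), mu B X, mo B X) = MU X" by (simp add: MU_def)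

lemma TG_coalg: assumes al: "(X, \<alpha>) \<in> alg_obj A B"
  shows "Tth_o A B \<theta> (G_o A C \<theta> (X, \<alpha>)) \<in> coalg_obj (alg_cat A B) (Cth A C \<theta>)"
proof -
  have X: "X \<in> obj A" using alg_facts[OF al] by simp
  define s where "s = TH (co C X) \<odot> Bt (DL X)"
  have ws: "wt s" using X by (simp add: s_def)
  have dms: "dm s = mo B (co C X)" and cds: "cd s = co C (mo B (co C X))" by (simp_all add: s_def)
  have e1: "Tth_o A B \<theta> (G_o A C \<theta> (X, \<alpha>)) =
     ((mo B (co C X), mu B (co C X)), cmp A (\<theta> (co C X)) (ma B (dlt C X)))"
    by (simp add: G_o_def Cth_def Tth_o_def T_o_def)
  have s_tr: "(mo B (co C X), cmp A (\<theta> (co C X)) (ma B (dlt C X)), co C (mo B (co C X))) = s"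
    by (rule teq) (simp_all add: s_def)
  have al1: "(mo B (co C X), mu B (co C X)) \<in> alg_obj A B" using X by (simp add: free_alg)
  have al2: "(co C (mo B (co C X)), cmp A (ca C (mu B (co C X))) (\<theta> (mo B (co C X)))) \<in> alg_obj A B"
    by (rule cth_alg[OF al1])
  have n1: "MU (co C (co C X)) \<odot> Bt (Bt (DL X)) = Bt (DL X) \<odot> MU (co C X)"
    using MU_nat[of "DL X"] X by simp
  have "s \<odot> MU (co C X) = TH (co C X) \<odot> (Bt (DL X) \<odot> MU (co C X))"
    using X by (simp add: s_def tassoc)
  also have "\<dots> = TH (co C X) \<odot> (MU (co C (co C X)) \<odot> Bt (Bt (DL X)))" by (simp add: n1)
  also have "\<dots> = Ct (MU (co C X)) \<odot> (TH (mo B (co C X)) \<odot> (Bt (TH (co C X)) \<odot> Bt (Bt (DL X))))"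
    using X by (simp add: wk1[OF dist_laws(1)] tassoc)
  also have "\<dots> = (Ct (MU (co C X)) \<odot> TH (mo B (co C X))) \<odot> Bt s"
    using X by (simp add: s_def tassoc Bt_comp)
  finally have eq1: "s \<odot> MU (co C X) = (Ct (MU (co C X)) \<odot> TH (mo B (co C X))) \<odot> Bt s" .
  have n2: "Ct (Bt (DL X)) \<odot> TH (co C X) = TH (co C (co C X)) \<odot> Bt (Ct (DL X))"
    using TH_nat[of "DL X"] X by simp
  have n3: "Bt (Ct (DL X)) \<odot> Bt (DL X) = Bt (DL (co C X)) \<odot> Bt (DL X)"
    using X by (simp add: Bt_comp[symmetric] com_laws)
  have n4: "(Ct (TH (co C X)) \<odot> (TH (co C (co C X)) \<odot> Bt (DL (co C X)))) \<odot> Bt (DL X)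
     = (DL (mo B (co C X)) \<odot> TH (co C X)) \<odot> Bt (DL X)"
    using X by (simp add: dist_laws)
  have "Ct s \<odot> s = Ct (TH (co C X)) \<odot> (Ct (Bt (DL X)) \<odot> (TH (co C X) \<odot> Bt (DL X)))"
    using X by (simp add: s_def tassoc Ct_comp)
  also have "\<dots> = Ct (TH (co C X)) \<odot> (TH (co C (co C X)) \<odot> (Bt (Ct (DL X)) \<odot> Bt (DL X)))"
    using X by (simp add: wk2[OF n2])
  also have "\<dots> = Ct (TH (co C X)) \<odot> (TH (co C (co C X)) \<odot> (Bt (DL (co C X)) \<odot> Bt (DL X)))"
    by (simp add: n3)
  also have "\<dots> = DL (mo B (co C X)) \<odot> s"
    using n4 X by (simp add: tassoc s_def)
  finally have eq2: "Ct s \<odot> s = DL (mo B (co C X)) \<odot> s" .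
  have "EP (mo B (co C X)) \<odot> s = (EP (mo B (co C X)) \<odot> TH (co C X)) \<odot> Bt (DL X)"
    using X by (simp add: s_def tassoc)
  also have "\<dots> = Bt (EP (co C X) \<odot> DL X)" using X by (simp add: dist_laws Bt_comp)
  also have "\<dots> = ID (mo B (co C X))" using X by (simp add: com_laws Bt_ID)
  finally have eq3: "EP (mo B (co C X)) \<odot> s = ID (mo B (co C X))" .
  show ?thesis unfolding e1 coalg_tr using al1 al2 ws eq1 eq2 eq3
    by (simp add: s_tr cth_tr MU_tr dms cds)
qed


lemma e_TG: "Tth_o A B \<theta> (G_o A C \<theta> (X, \<alpha>)) =
     ((mo B (co C X), mu B (co C X)), cmp A (\<theta> (co C X)) (ma B (dlt C X)))"
  by (simp add: G_o_def Cth_def Tth_o_def T_o_def)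
lemma e_GT: "G_o A C \<theta> (T_o B (X, \<alpha>)) =
     ((co C (mo B X), cmp A (ca C (mu B X)) (\<theta> (mo B X))), dlt C (mo B X))"
  by (simp add: G_o_def Cth_def T_o_def)
lemma e_G: "G_o A C \<theta> (X, \<alpha>) = ((co C X, cmp A (ca C \<alpha>) (\<theta> X)), dlt C X)"
  by (simp add: G_o_def Cth_def)
lemma s_tr: "(mo B (co C X), cmp A (\<theta> (co C X)) (ma B (dlt C X)), co C (mo B (co C X))) = TH (co C X) \<odot> Bt (DL X)"
  by (rule teq) simp_all
lemma TH_tr: "(mo B (co C X), \<theta> X, co C (mo B X)) = TH X" by (simp add: TH_def)
lemma EP_tr: "(co C X, eps C X, X) = EP X" by (simp add: EP_def)

lemma theta_hom: assumes al: "(X, \<alpha>) \<in> alg_obj A B"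
  shows "\<theta> X \<in> hom (EMcoalg A B C \<theta>) (Tth_o A B \<theta> (G_o A C \<theta> (X, \<alpha>))) (G_o A C \<theta> (T_o B (X, \<alpha>)))"
proof -
  have X: "X \<in> obj A" using alg_facts[OF al] by simp
  have c1: "Tth_o A B \<theta> (G_o A C \<theta> (X, \<alpha>)) \<in> coalg_obj (alg_cat A B) (Cth A C \<theta>)" by (rule TG_coalg[OF al])
  have c2: "G_o A C \<theta> (T_o B (X, \<alpha>)) \<in> coalg_obj (alg_cat A B) (Cth A C \<theta>)"
    unfolding T_o_def using G_coalg[OF free_alg[OF X]] by simp
  have al1: "(mo B (co C X), mu B (co C X)) \<in> alg_obj A B" using X by (simp add: free_alg)
  have al2: "(co C (mo B X), cmp A (ca C (mu B X)) (\<theta> (mo B X))) \<in> alg_obj A B"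
    by (rule cth_alg[OF free_alg[OF X]])
  have h: "\<theta> X \<in> hom (alg_cat A B) (mo B (co C X), mu B (co C X)) (co C (mo B X), cmp A (ca C (mu B X)) (\<theta> (mo B X)))"
    unfolding alg_hom_tr using al1 al2 X by (simp add: TH_tr cth_tr MU_tr dist_laws tassoc)
  have eq: "Ct (TH X) \<odot> (TH (co C X) \<odot> Bt (DL X)) = DL (mo B X) \<odot> TH X"
    using X by (simp add: dist_laws)
  show ?thesis using c1 c2 h eq unfolding e_TG e_GT em_hom_tr by (simp add: TH_tr s_tr DL_tr)
qed

lemma Omega_theta: "Omega_nat A B C \<theta> (\<lambda>Xa. \<theta> (fst Xa))"
  unfolding Omega_nat_def is_nat_def obj_alg cmp_em
proof (intro conjI ballI allI impI)
  fix Xa assume "Xa \<in> alg_obj A B"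
  then show "\<theta> (fst Xa) \<in> hom (EMcoalg A B C \<theta>) ((Tth_o A B \<theta> \<circ> G_o A C \<theta>) Xa) ((G_o A C \<theta> \<circ> T_o B) Xa)"
    using theta_hom[of "fst Xa" "snd Xa"] by simp
next
  fix Xa Ya f assume "f \<in> hom (alg_cat A B) Xa Ya"
  then have "f \<in> hom A (fst Xa) (fst Ya)" by (simp add: alg_cat_def split: if_splits)
  then show "cmp A (\<theta> (fst Ya)) ((ma B \<circ> ca C) f) = cmp A ((ca C \<circ> ma B) f) (\<theta> (fst Xa))"
    by (simp add: th_nat)
qed

lemma mate_theta: assumes Y: "Y \<in> coalg_obj (alg_cat A B) (Cth A C \<theta>)"
  and Om: "\<forall>Xa\<in>alg_obj A B. \<Omega> Xa = \<theta> (fst Xa)"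
  shows "mate A B C \<theta> \<Omega> Y = idt (alg_cat A B) (T_o B (fst Y))"
proof -
  obtain X \<alpha> \<delta> where Yd: "Y = ((X, \<alpha>), \<delta>)" by (metis prod.collapse)
  define d where "d = (X, \<delta>, co C X)"
  have al: "(X, \<alpha>) \<in> alg_obj A B" and wd: "wt d" and cu: "EP X \<odot> d = ID X"
    using Y unfolding Yd coalg_tr d_def by auto
  have X: "X \<in> obj A" using alg_facts[OF al] by simp
  have "EP (mo B X) \<odot> (TH X \<odot> Bt d) = (EP (mo B X) \<odot> TH X) \<odot> Bt d"
    using X wd by (simp add: tassoc d_def)
  also have "\<dots> = Bt (EP X \<odot> d)" using X wd by (simp add: dist_laws Bt_comp d_def)
  also have "\<dots> = ID (mo B X)" using X by (simp add: cu Bt_ID)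
  finally have "ar (EP (mo B X) \<odot> (TH X \<odot> Bt d)) = ar (ID (mo B X))" by simp
  then show ?thesis using Om al
    by (simp add: Yd mate_def cmp_alg idt_alg Cth_def T_o_def d_def)
qed


lemma Omega_unique: assumes N: "Omega_nat A B C \<theta> \<Omega>"
  and M: "\<forall>Y\<in>coalg_obj (alg_cat A B) (Cth A C \<theta>). mate A B C \<theta> \<Omega> Y = idt (alg_cat A B) (T_o B (fst Y))"
  and al: "(X, \<alpha>) \<in> alg_obj A B"
  shows "\<Omega> (X, \<alpha>) = \<theta> X"
proof -
  have X: "X \<in> obj A" and wa: "wt (mo B X, \<alpha>, X)" using alg_facts[OF al] by simp_all
  define a where "a = (mo B X, \<alpha>, X)"
  have dma: "dm a = mo B X" and cda: "cd a = X" by (simp_all add: a_def)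
  define Xc where "Xc = (co C X, cmp A (ca C \<alpha>) (\<theta> X))"
  have alc: "Xc \<in> alg_obj A B" unfolding Xc_def by (rule cth_alg[OF al])
  have Nhom: "\<And>Xa. Xa \<in> alg_obj A B \<Longrightarrow> \<Omega> Xa \<in> hom (EMcoalg A B C \<theta>) (Tth_o A B \<theta> (G_o A C \<theta> Xa)) (G_o A C \<theta> (T_o B Xa))"
    and Nnat: "\<And>Xa Ya f. f \<in> hom (alg_cat A B) Xa Ya \<Longrightarrow>
       cmp A (\<Omega> Ya) (ma B (ca C f)) = cmp A (ca C (ma B f)) (\<Omega> Xa)"
    using N unfolding Omega_nat_def is_nat_def obj_alg cmp_em by auto
  define W where "W = (mo B (co C X), \<Omega> (X, \<alpha>), co C (mo B X))"
  define W' where "W' = (mo B (co C (co C X)), \<Omega> Xc, co C (mo B (co C X)))"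
  have h1: "\<Omega> (X, \<alpha>) \<in> hom (EMcoalg A B C \<theta>) (Tth_o A B \<theta> (G_o A C \<theta> (X, \<alpha>))) (G_o A C \<theta> (T_o B (X, \<alpha>)))"
    using Nhom[OF al] .
  then have wW: "wt W" and cW: "Ct W \<odot> (TH (co C X) \<odot> Bt (DL X)) = DL (mo B X) \<odot> W"
    unfolding e_TG e_GT em_hom_tr alg_hom_tr W_def by (simp_all add: s_tr DL_tr)
  have "\<Omega> Xc \<in> hom (EMcoalg A B C \<theta>) (Tth_o A B \<theta> (G_o A C \<theta> Xc)) (G_o A C \<theta> (T_o B Xc))"
    using Nhom[OF alc] .
  then have wW': "wt W'"
    unfolding Xc_def e_TG e_GT em_hom_tr alg_hom_tr W'_def by simp
  have epi: "eps C X \<in> hom (alg_cat A B) Xc (X, \<alpha>)"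
  proof -
    have n: "EP X \<odot> Ct a = a \<odot> EP (mo B X)" using EP_nat[of a] wa by (simp add: a_def)
    have "EP X \<odot> (Ct a \<odot> TH X) = (EP X \<odot> Ct a) \<odot> TH X" using X wa[folded a_def] by (simp add: tassoc dma cda)
    also have "\<dots> = a \<odot> (EP (mo B X) \<odot> TH X)" using X wa[folded a_def] by (simp add: n tassoc dma cda)
    also have "\<dots> = a \<odot> Bt (EP X)" using X by (simp add: dist_laws)
    finally have eqq: "EP X \<odot> (Ct a \<odot> TH X) = a \<odot> Bt (EP X)" .
    show ?thesis unfolding Xc_def alg_hom_tr using alc[unfolded Xc_def] al X wa eqq
      by (simp add: cth_tr EP_tr a_def)
  qed
  have nat: "W \<odot> Bt (Ct (EP X)) = Ct (Bt (EP X)) \<odot> W'"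
    using Nnat[OF epi] by (intro teq) (simp_all add: W_def W'_def Xc_def)
  have mt: "mate A B C \<theta> \<Omega> (G_o A C \<theta> (X, \<alpha>)) = idt (alg_cat A B) (T_o B (fst (G_o A C \<theta> (X, \<alpha>))))"
    using M G_coalg[OF al] by blast
  have mt': "EP (mo B (co C X)) \<odot> (W' \<odot> Bt (DL X)) = ID (mo B (co C X))"
    using mt by (intro teq) (simp_all add: e_G mate_def cmp_alg idt_alg Cth_def T_o_def W'_def Xc_def)
  have n1: "EP (mo B X) \<odot> Ct (Bt (EP X)) = Bt (EP X) \<odot> EP (mo B (co C X))"
    using EP_nat[of "Bt (EP X)"] X by simp
  have dW: "dm W = mo B (co C X)" "cd W = co C (mo B X)" by (simp_all add: W_def)
  have dW': "dm W' = mo B (co C (co C X))" "cd W' = co C (mo B (co C X))" by (simp_all add: W'_def)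
  have "EP (mo B X) \<odot> W = EP (mo B X) \<odot> (W \<odot> Bt (Ct (EP X) \<odot> DL X))"
    using X wW by (simp add: com_laws Bt_ID tidr dW)
  also have "\<dots> = EP (mo B X) \<odot> (W \<odot> (Bt (Ct (EP X)) \<odot> Bt (DL X)))"
    using X by (simp add: Bt_comp)
  also have "\<dots> = EP (mo B X) \<odot> (Ct (Bt (EP X)) \<odot> (W' \<odot> Bt (DL X)))"
    using X wW wW' by (simp add: wk2[OF nat] dW dW')
  also have "\<dots> = Bt (EP X) \<odot> (EP (mo B (co C X)) \<odot> (W' \<odot> Bt (DL X)))"
    using X wW wW' by (simp add: wk2[OF n1] dW dW')
  also have "\<dots> = Bt (EP X)" using X by (simp add: mt' tidr)
  finally have eW: "EP (mo B X) \<odot> W = Bt (EP X)" .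
  have n2: "Ct (Bt (EP X)) \<odot> TH (co C X) = TH X \<odot> Bt (Ct (EP X))"
    using TH_nat[of "EP X"] X by simp
  have "W = (Ct (EP (mo B X)) \<odot> DL (mo B X)) \<odot> W"
    using X wW by (simp add: com_laws tidl dW)
  also have "\<dots> = Ct (EP (mo B X)) \<odot> (Ct W \<odot> (TH (co C X) \<odot> Bt (DL X)))"
    using X wW by (simp add: tassoc cW dW)
  also have "\<dots> = Ct (EP (mo B X) \<odot> W) \<odot> (TH (co C X) \<odot> Bt (DL X))"
    using X wW by (simp add: tassoc Ct_comp dW)
  also have "\<dots> = TH X \<odot> (Bt (Ct (EP X)) \<odot> Bt (DL X))"
    using X by (simp add: eW wk2[OF n2])
  also have "\<dots> = TH X" using X by (simp add: Bt_comp[symmetric] com_laws Bt_ID tidr)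
  finally have "ar W = \<theta> X" by simp
  then show ?thesis by (simp add: W_def)
qed


lemma comult: assumes X: "X \<in> obj A"
  shows "cmp A (ca C (ma B (eta B X))) (\<theta> X) =
     cmp A (\<theta> (mo B X)) (cmp A (ma B (\<theta> X)) (ma B (eta B (co C X))))"
proof -
  have n: "TH (mo B X) \<odot> Bt (Ct (ETA X)) = Ct (Bt (ETA X)) \<odot> TH X"
    using TH_nat[of "ETA X"] X by simp
  have "TH (mo B X) \<odot> (Bt (TH X) \<odot> Bt (ETA (co C X))) = TH (mo B X) \<odot> Bt (TH X \<odot> ETA (co C X))"
    using X by (simp add: Bt_comp)
  also have "\<dots> = Ct (Bt (ETA X)) \<odot> TH X" using X by (simp add: dist_laws n)
  finally have "ar (Ct (Bt (ETA X)) \<odot> TH X) = ar (TH (mo B X) \<odot> (Bt (TH X) \<odot> Bt (ETA (co C X))))" by simp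
  then show ?thesis by simp
qed

lemma Omega_nat_cong: assumes "\<forall>Xa\<in>alg_obj A B. \<Omega> Xa = \<Omega>' Xa"
  shows "Omega_nat A B C \<theta> \<Omega> = Omega_nat A B C \<theta> \<Omega>'"
proof -
  have "\<And>Xa Ya f. f \<in> hom (alg_cat A B) Xa Ya \<Longrightarrow> Xa \<in> alg_obj A B \<and> Ya \<in> alg_obj A B"
    by (simp add: alg_cat_def split: if_splits)
  then show ?thesis using assms unfolding Omega_nat_def is_nat_def obj_alg
    by (smt (verit))
qed

lemma main: "(\<forall>\<Omega>. (Omega_nat A B C \<theta> \<Omega> \<and>
               (\<forall>Y\<in>obj (EMcoalg A B C \<theta>).
                  mate A B C \<theta> \<Omega> Y = idt (alg_cat A B) (T_o B (fst Y))))
           \<longleftrightarrow> (\<forall>Xa\<in>obj (alg_cat A B). \<Omega> Xa = \<theta> (fst Xa))) \<and>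
         (implements_ext A B C \<theta> (\<lambda>Xa. \<theta> (fst Xa)) \<longleftrightarrow>
           (\<forall>Xa\<in>obj (alg_cat A B).
              iso_in (EMcoalg A B C \<theta>) (\<theta> (fst Xa))
                (Tth_o A B \<theta> (G_o A C \<theta> Xa)) (G_o A C \<theta> (T_o B Xa))))"
proof (rule conjI; intro allI iffI)
  fix \<Omega>
  assume h: "Omega_nat A B C \<theta> \<Omega> \<and> (\<forall>Y\<in>obj (EMcoalg A B C \<theta>).
                  mate A B C \<theta> \<Omega> Y = idt (alg_cat A B) (T_o B (fst Y)))"
  show "\<forall>Xa\<in>obj (alg_cat A B). \<Omega> Xa = \<theta> (fst Xa)"
  proof
    fix Xa assume "Xa \<in> obj (alg_cat A B)"
    then have "(fst Xa, snd Xa) \<in> alg_obj A B" by (simp add: obj_alg)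
    from Omega_unique[OF _ _ this] h show "\<Omega> Xa = \<theta> (fst Xa)" by (simp add: obj_em)
  qed
next
  fix \<Omega>
  assume h: "\<forall>Xa\<in>obj (alg_cat A B). \<Omega> Xa = \<theta> (fst Xa)"
  then have "Omega_nat A B C \<theta> \<Omega> = Omega_nat A B C \<theta> (\<lambda>Xa. \<theta> (fst Xa))"
    by (intro Omega_nat_cong) (simp add: obj_alg)
  then have "Omega_nat A B C \<theta> \<Omega>" using Omega_theta by simp
  moreover have "\<forall>Y\<in>obj (EMcoalg A B C \<theta>). mate A B C \<theta> \<Omega> Y = idt (alg_cat A B) (T_o B (fst Y))"
    using h mate_theta by (simp add: obj_em obj_alg)
  ultimately show "Omega_nat A B C \<theta> \<Omega> \<and> (\<forall>Y\<in>obj (EMcoalg A B C \<theta>).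
                  mate A B C \<theta> \<Omega> Y = idt (alg_cat A B) (T_o B (fst Y)))" by blast
next
  assume "implements_ext A B C \<theta> (\<lambda>Xa. \<theta> (fst Xa))"
  then show "\<forall>Xa\<in>obj (alg_cat A B). iso_in (EMcoalg A B C \<theta>) (\<theta> (fst Xa))
                (Tth_o A B \<theta> (G_o A C \<theta> Xa)) (G_o A C \<theta> (T_o B Xa))"
    unfolding implements_ext_def by blast
next
  assume iso: "\<forall>Xa\<in>obj (alg_cat A B). iso_in (EMcoalg A B C \<theta>) (\<theta> (fst Xa))
                (Tth_o A B \<theta> (G_o A C \<theta> Xa)) (G_o A C \<theta> (T_o B Xa))"
  have cm: "\<forall>Xa\<in>obj (alg_cat A B).
        cmp (EMcoalg A B C \<theta>) (ca C (ma B (eta B (fst Xa)))) (\<theta> (fst Xa)) =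
        cmp (EMcoalg A B C \<theta>) (\<theta> (fst (T_o B Xa)))
          (cmp (EMcoalg A B C \<theta>) (ma B (\<theta> (fst Xa)))
             (ma B (eta B (fst (fst (G_o A C \<theta> Xa))))))"
  proof
    fix Xa assume "Xa \<in> obj (alg_cat A B)"
    then have "fst Xa \<in> obj A" by (simp add: obj_alg alg_obj_def)
    then show "cmp (EMcoalg A B C \<theta>) (ca C (ma B (eta B (fst Xa)))) (\<theta> (fst Xa)) =
        cmp (EMcoalg A B C \<theta>) (\<theta> (fst (T_o B Xa)))
          (cmp (EMcoalg A B C \<theta>) (ma B (\<theta> (fst Xa)))
             (ma B (eta B (fst (fst (G_o A C \<theta> Xa))))))"
      using comult by (simp add: cmp_em T_o_def G_o_def Cth_def)
  qed
  have cu: "\<forall>Xa\<in>obj (alg_cat A B).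
        cmp (EMcoalg A B C \<theta>) (ca C (snd Xa)) (\<theta> (fst Xa)) = snd (fst (G_o A C \<theta> Xa))"
    by (simp add: cmp_em G_o_def Cth_def)
  show "implements_ext A B C \<theta> (\<lambda>Xa. \<theta> (fst Xa))"
    unfolding implements_ext_def using Omega_theta iso cm cu by blast
qed

end

theorem lemma3p6:
  fixes A :: "('o, 'a) cat" and B :: "('o, 'a) monad" and C :: "('o, 'a) comonad"
    and \<theta> :: "'o \<Rightarrow> 'a"
  assumes "is_cat A" and "is_monad A B" and "is_comonad A C" and "is_mixed_dist A B C \<theta>"
  shows "(\<forall>\<Omega>. (Omega_nat A B C \<theta> \<Omega> \<and>
               (\<forall>Y\<in>obj (EMcoalg A B C \<theta>).
                  mate A B C \<theta> \<Omega> Y = idt (alg_cat A B) (T_o B (fst Y))))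
           \<longleftrightarrow> (\<forall>Xa\<in>obj (alg_cat A B). \<Omega> Xa = \<theta> (fst Xa))) \<and>
         (implements_ext A B C \<theta> (\<lambda>Xa. \<theta> (fst Xa)) \<longleftrightarrow>
           (\<forall>Xa\<in>obj (alg_cat A B).
              iso_in (EMcoalg A B C \<theta>) (\<theta> (fst Xa))
                (Tth_o A B \<theta> (G_o A C \<theta> Xa)) (G_o A C \<theta> (T_o B Xa))))"
  by (rule main[OF assms])

end
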